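(* For any $\varepsilon\in(0,1)$, $\delta>0$ and $\tau>0$ there is a CTMC $\mathcal{M}=(S,P,E,s_{init},L)$ with states $s,s'$ such that $\{s,s'\}$ is a block of a $\tau$-quasi-lumpability $\Omega$ of $\mathcal{M}$, but the pair $(s,s')$ satisfies neither the $\delta$-condition $|\ln E(s)-\ln E(s')|\leq\delta$ nor the $\varepsilon$-condition (for all $A\subseteq S$: $P(s,A)\leq P(s',R(A))+\varepsilon$) with respect to the equivalence relation $R$ induced by $\Omega$.
   Context: A CTMC $(S,P,E,s_{init},L)$: finite $S$, transition probabilities $P\colon S\to\mathrm{Distr}(S)$ with $P(s,A)=\sum_{a\in A}P(s,a)$, exit rates $E\colon S\to\mathbb{R}_{>0}$, initial state, labeling. For $R\subseteq S\times S$ and $A\subseteq S$, $R(A)=\{t\mid\exists a\in A:(a,t)\in R\}$. For $\tau\geq0$, a partition $\Omega=\{\Omega_1,\dots,\Omega_m\}$ of $S$ is a $\tau$-quasi-lumpability if for all $i,j$ and all $s,s'\in\Omega_i$: $|P(s,\Omega_j)E(s)-P(s',\Omega_j)E(s')|\leq\tau$. *)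

theory Defs
  imports Complex_Main
begin

definition ctmc :: "'s set \<Rightarrow> ('s \<Rightarrow> 's \<Rightarrow> real) \<Rightarrow> ('s \<Rightarrow> real) \<Rightarrow> 's \<Rightarrow> ('s \<Rightarrow> 'l set) \<Rightarrow> bool" where
  "ctmc S P E s0 L \<longleftrightarrow>
     finite S \<and> s0 \<in> S \<and>
     (\<forall>s\<in>S. (\<forall>t. 0 \<le> P s t) \<and> (\<forall>t. t \<notin> S \<longrightarrow> P s t = 0) \<and> sum (P s) S = 1) \<and>
     (\<forall>s\<in>S. 0 < E s)"

definition Pset :: "'s set \<Rightarrow> ('s \<Rightarrow> 's \<Rightarrow> real) \<Rightarrow> 's \<Rightarrow> 's set \<Rightarrow> real" where
  "Pset S P s A = sum (P s) (A \<inter> S)"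

definition is_partition :: "'s set \<Rightarrow> 's set set \<Rightarrow> bool" where
  "is_partition S \<Omega> \<longleftrightarrow>
     (\<forall>B\<in>\<Omega>. B \<noteq> {} \<and> B \<subseteq> S) \<and> \<Union>\<Omega> = S \<and>
     (\<forall>B\<in>\<Omega>. \<forall>C\<in>\<Omega>. B \<noteq> C \<longrightarrow> B \<inter> C = {})"

definition quasi_lumpability :: "real \<Rightarrow> 's set \<Rightarrow> ('s \<Rightarrow> 's \<Rightarrow> real) \<Rightarrow> ('s \<Rightarrow> real) \<Rightarrow> 's set set \<Rightarrow> bool" where
  "quasi_lumpability \<tau> S P E \<Omega> \<longleftrightarrow>
     is_partition S \<Omega> \<and>
     (\<forall>Bi\<in>\<Omega>. \<forall>Bj\<in>\<Omega>. \<forall>s\<in>Bi. \<forall>s'\<in>Bi.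
        \<bar>Pset S P s Bj * E s - Pset S P s' Bj * E s'\<bar> \<le> \<tau>)"

definition induced_rel :: "'s set set \<Rightarrow> ('s \<times> 's) set" where
  "induced_rel \<Omega> = {(x, y). \<exists>B\<in>\<Omega>. x \<in> B \<and> y \<in> B}"

definition delta_condition :: "real \<Rightarrow> ('s \<Rightarrow> real) \<Rightarrow> 's \<Rightarrow> 's \<Rightarrow> bool" where
  "delta_condition \<delta> E s s' \<longleftrightarrow> \<bar>ln (E s) - ln (E s')\<bar> \<le> \<delta>"

definition eps_condition :: "real \<Rightarrow> 's set \<Rightarrow> ('s \<Rightarrow> 's \<Rightarrow> real) \<Rightarrow> ('s \<times> 's) set \<Rightarrow> 's \<Rightarrow> 's \<Rightarrow> bool" where
  "eps_condition \<epsilon> S P R s s' \<longleftrightarrow>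
     (\<forall>A\<subseteq>S. Pset S P s A \<le> Pset S P s' (R `` A) + \<epsilon>)"

end

theory Submission
  imports Defs
begin

theorem proposition2:
  fixes \<epsilon> \<delta> \<tau> :: real
  assumes "0 < \<epsilon>" "\<epsilon> < 1" "0 < \<delta>" "0 < \<tau>"
  shows "\<exists>(S :: nat set) P E s0 (L :: nat \<Rightarrow> nat set) \<Omega> s s'.
           ctmc S P E s0 L \<and> quasi_lumpability \<tau> S P E \<Omega> \<and> {s, s'} \<in> \<Omega> \<and>
           \<not> delta_condition \<delta> E s s' \<and>
           \<not> eps_condition \<epsilon> S P (induced_rel \<Omega>) s s'"
proof -
  define b where "b = \<tau> / exp (2*\<delta>)"
  have bpos: "0 < b" using assms by (simp add: b_def)
  have ble: "b \<le> \<tau>" using assms unfolding b_def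
    by (simp add: divide_le_eq)
  have lnb: "ln b = ln \<tau> - 2*\<delta>" using assms by (simp add: b_def ln_div)
  define S :: "nat set" where "S = {0,1,2,3}"
  define P :: "nat \<Rightarrow> nat \<Rightarrow> real" where
    "P = (\<lambda>s t. if (s=0\<and>t=2) \<or> (s=1\<and>t=3) \<or> (s=2\<and>t=2) \<or> (s=3\<and>t=3) then 1 else 0)"
  define E :: "nat \<Rightarrow> real" where "E = (\<lambda>s. if s = 0 then \<tau> else if s = 1 then b else 1)"
  define \<Omega> :: "nat set set" where "\<Omega> = {{0,1},{2},{3}}"
  have c: "ctmc S P E 0 (\<lambda>_. {})"
    unfolding ctmc_def S_def P_def E_def using assms bpos by auto
  have part: "is_partition S \<Omega>" unfolding is_partition_def S_def \<Omega>_def by auto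
  have q: "quasi_lumpability \<tau> S P E \<Omega>"
    unfolding quasi_lumpability_def using part
    unfolding \<Omega>_def Pset_def S_def P_def E_def using assms bpos ble
    by (auto simp: insert_Diff_if)
  have d: "\<not> delta_condition \<delta> E 0 1"
    unfolding delta_condition_def E_def using lnb assms by simp
  have e: "\<not> eps_condition \<epsilon> S P (induced_rel \<Omega>) 0 1"
  proof
    assume "eps_condition \<epsilon> S P (induced_rel \<Omega>) 0 1"
    then have "Pset S P 0 {2} \<le> Pset S P 1 (induced_rel \<Omega> `` {2}) + \<epsilon>"
      unfolding eps_condition_def S_def by auto
    moreover have "induced_rel \<Omega> `` {2} = {2}"
      unfolding induced_rel_def \<Omega>_def by auto
    ultimately show False using assms unfolding Pset_def S_def P_def by simp
  qed
  show ?thesis using c q d e unfolding \<Omega>_def by blast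
qed

end
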